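(* Let $M$ be a monoid and let $D:M\times M\to\overline{\mathbb N}$ be a mapping. Then the following are equivalent: (i) $D$ is a strict length function for $M$; (ii) $D=D_\chi$ for some strongly faithful elliptic $M$-tree $\chi$. Moreover, if these conditions hold, $\chi$ is unique up to isomorphism of elliptic $M$-trees.
   Context: $\overline{\mathbb N}=\mathbb N\cup\{\omega\}$. A length function for $M$ is $D:M\times M\to\overline{\mathbb N}$ satisfying (L1) $D(m,m')=D(m',m)$; (L2) $D(m',m'')\le D(m,m)$; (L3) $D(m',m'')\le D(m'm,m''m)$; (L4) $D(m,m'')\ge\min\{D(m,m'),D(m',m'')\}$; it is strict if also (L5) $D(m',m'')=D(m,m)\Rightarrow m'=m''$. Rooted trees, rays, maximal rays, uniform rooted trees (all maximal rays have equal length), $\alpha\wedge\beta$ = longest common initial segment of rays, $|\cdot|$ = length. An elliptic $M$-tree is $\chi=(r_0,T,\alpha,\theta)$ with $(r_0,T)$ uniform, $\alpha$ a maximal ray, $\theta$ a monoid homomorphism from $M$ into the monoid of depth-preserving distance-non-increasing self-maps of $\mathrm{Vert}(T)$, such that $\mathrm{Vert}(T)=\bigcup_i\alpha_iM$ (actions extended componentwise to rays). It is strongly faithful if $\alpha m=\alpha m'$ implies $m=m'$. $D_\chi(m,m')=|\alpha m\wedge\alpha m'|$. Isomorphism of elliptic $M$-trees: bijective elliptic contraction carrying $\alpha$ to $\alpha'$ and commuting with the actions. *)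

theory Defs
  imports Main "HOL-Library.Extended_Nat"
begin

text \<open>\<open>\<omega>\<close> is rendered as \<open>\<infinity> :: enat\<close>; the monoid is a type of class \<open>monoid_mult\<close>,
  with \<open>m' m\<close> written \<open>m' * m\<close>.\<close>

definition length_function :: "('m::monoid_mult \<Rightarrow> 'm \<Rightarrow> enat) \<Rightarrow> bool" where
  "length_function D \<longleftrightarrow>
     (\<forall>m m'. D m m' = D m' m) \<and>
     (\<forall>m m' m''. D m' m'' \<le> D m m) \<and>
     (\<forall>m m' m''. D m' m'' \<le> D (m' * m) (m'' * m)) \<and>
     (\<forall>m m' m''. D m m'' \<ge> min (D m m') (D m' m''))"

definition strict_length_function :: "('m::monoid_mult \<Rightarrow> 'm \<Rightarrow> enat) \<Rightarrow> bool" where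
  "strict_length_function D \<longleftrightarrow> length_function D \<and>
     (\<forall>m m' m''. D m' m'' = D m m \<longrightarrow> m' = m'')"

text \<open>A rooted tree \<open>(r0, T)\<close> is given by its vertex set \<open>V\<close>, its root \<open>r0\<close> and the
  parent map \<open>par\<close> (the edges of \<open>T\<close> are the pairs \<open>{v, par v}\<close>, \<open>v \<noteq> r0\<close>).\<close>

definition rooted_tree :: "'v \<Rightarrow> 'v set \<Rightarrow> ('v \<Rightarrow> 'v) \<Rightarrow> bool" where
  "rooted_tree r0 V par \<longleftrightarrow> r0 \<in> V \<and> (\<forall>v\<in>V - {r0}. par v \<in> V) \<and>
     (\<forall>v\<in>V. \<exists>n. (par ^^ n) v = r0)"

definition tadj :: "'v \<Rightarrow> 'v set \<Rightarrow> ('v \<Rightarrow> 'v) \<Rightarrow> 'v \<Rightarrow> 'v \<Rightarrow> bool" where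
  "tadj r0 V par u v \<longleftrightarrow> u \<in> V \<and> v \<in> V \<and>
     ((u \<noteq> r0 \<and> par u = v) \<or> (v \<noteq> r0 \<and> par v = u))"

definition tdist :: "'v \<Rightarrow> 'v set \<Rightarrow> ('v \<Rightarrow> 'v) \<Rightarrow> 'v \<Rightarrow> 'v \<Rightarrow> nat" where
  "tdist r0 V par u v = (LEAST n. \<exists>xs. length xs = Suc n \<and> hd xs = u \<and> last xs = v \<and>
       (\<forall>i<n. tadj r0 V par (xs ! i) (xs ! Suc i)))"

definition tdepth :: "'v \<Rightarrow> 'v set \<Rightarrow> ('v \<Rightarrow> 'v) \<Rightarrow> 'v \<Rightarrow> nat" where
  "tdepth r0 V par v = tdist r0 V par r0 v"

text \<open>Rays: (finite or infinite) paths starting at the root and moving away from it, encoded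
  as \<open>nat \<Rightarrow> 'v option\<close>: \<open>\<rho> i = Some v\<close> iff \<open>v\<close> is the \<open>i\<close>-th vertex of the ray.\<close>

definition is_ray :: "'v \<Rightarrow> 'v set \<Rightarrow> ('v \<Rightarrow> 'v) \<Rightarrow> (nat \<Rightarrow> 'v option) \<Rightarrow> bool" where
  "is_ray r0 V par \<rho> \<longleftrightarrow> \<rho> 0 = Some r0 \<and>
     (\<forall>i. \<rho> i = None \<longrightarrow> \<rho> (Suc i) = None) \<and>
     (\<forall>i w. \<rho> (Suc i) = Some w \<longrightarrow> w \<in> V \<and> w \<noteq> r0 \<and> \<rho> i = Some (par w))"

definition ray_len :: "(nat \<Rightarrow> 'v option) \<Rightarrow> enat" where
  "ray_len \<rho> = (if \<forall>i. \<rho> i \<noteq> None then \<infinity> else enat (LEAST i. \<rho> (Suc i) = None))"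

definition maximal_ray :: "'v \<Rightarrow> 'v set \<Rightarrow> ('v \<Rightarrow> 'v) \<Rightarrow> (nat \<Rightarrow> 'v option) \<Rightarrow> bool" where
  "maximal_ray r0 V par \<rho> \<longleftrightarrow> is_ray r0 V par \<rho> \<and>
     (\<forall>\<sigma>. is_ray r0 V par \<sigma> \<and> \<rho> \<subseteq>\<^sub>m \<sigma> \<longrightarrow> \<sigma> = \<rho>)"

definition uniform_tree :: "'v \<Rightarrow> 'v set \<Rightarrow> ('v \<Rightarrow> 'v) \<Rightarrow> bool" where
  "uniform_tree r0 V par \<longleftrightarrow> rooted_tree r0 V par \<and>
     (\<forall>\<rho> \<sigma>. maximal_ray r0 V par \<rho> \<and> maximal_ray r0 V par \<sigma> \<longrightarrow> ray_len \<rho> = ray_len \<sigma>)"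

definition ray_meet :: "(nat \<Rightarrow> 'v option) \<Rightarrow> (nat \<Rightarrow> 'v option) \<Rightarrow> nat \<Rightarrow> 'v option" where
  "ray_meet \<rho> \<sigma> = (\<lambda>i. if \<forall>j\<le>i. \<rho> j = \<sigma> j then \<rho> i else None)"

definition ray_map :: "('v \<Rightarrow> 'w) \<Rightarrow> (nat \<Rightarrow> 'v option) \<Rightarrow> nat \<Rightarrow> 'w option" where
  "ray_map f \<rho> = (\<lambda>i. map_option f (\<rho> i))"

record ('v, 'm) etree =
  root :: 'v
  verts :: "'v set"
  parent :: "'v \<Rightarrow> 'v"
  axis :: "nat \<Rightarrow> 'v option"
  act :: "'m \<Rightarrow> 'v \<Rightarrow> 'v"

abbreviation edist :: "('v, 'm) etree \<Rightarrow> 'v \<Rightarrow> 'v \<Rightarrow> nat" where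
  "edist \<chi> \<equiv> tdist (root \<chi>) (verts \<chi>) (parent \<chi>)"

abbreviation edepth :: "('v, 'm) etree \<Rightarrow> 'v \<Rightarrow> nat" where
  "edepth \<chi> \<equiv> tdepth (root \<chi>) (verts \<chi>) (parent \<chi>)"

definition elliptic_contraction :: "('v, 'm) etree \<Rightarrow> ('w, 'm) etree \<Rightarrow> ('v \<Rightarrow> 'w) \<Rightarrow> bool" where
  "elliptic_contraction \<chi> \<chi>' f \<longleftrightarrow> f ` verts \<chi> \<subseteq> verts \<chi>' \<and>
     (\<forall>v\<in>verts \<chi>. edepth \<chi>' (f v) = edepth \<chi> v) \<and>
     (\<forall>u\<in>verts \<chi>. \<forall>v\<in>verts \<chi>. edist \<chi>' (f u) (f v) \<le> edist \<chi> u v)"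

text \<open>The action is written on the right (\<open>v m\<close>), so \<open>\<theta>\<close> is a homomorphism into the monoid of
  self-maps of \<open>Vert(T)\<close> with product \<open>f g = g \<circ> f\<close>, i.e. \<open>v (m m') = (v m) m'\<close>.\<close>
definition elliptic_tree :: "('v, 'm::monoid_mult) etree \<Rightarrow> bool" where
  "elliptic_tree \<chi> \<longleftrightarrow>
     uniform_tree (root \<chi>) (verts \<chi>) (parent \<chi>) \<and>
     maximal_ray (root \<chi>) (verts \<chi>) (parent \<chi>) (axis \<chi>) \<and>
     (\<forall>m. elliptic_contraction \<chi> \<chi> (act \<chi> m)) \<and>
     (\<forall>v\<in>verts \<chi>. act \<chi> 1 v = v) \<and>
     (\<forall>m m'. \<forall>v\<in>verts \<chi>. act \<chi> (m * m') v = act \<chi> m' (act \<chi> m v)) \<and>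
     verts \<chi> = {act \<chi> m v | m v. \<exists>i. axis \<chi> i = Some v}"

definition strongly_faithful :: "('v, 'm::monoid_mult) etree \<Rightarrow> bool" where
  "strongly_faithful \<chi> \<longleftrightarrow>
     (\<forall>m m'. ray_map (act \<chi> m) (axis \<chi>) = ray_map (act \<chi> m') (axis \<chi>) \<longrightarrow> m = m')"

definition D_chi :: "('v, 'm::monoid_mult) etree \<Rightarrow> 'm \<Rightarrow> 'm \<Rightarrow> enat" where
  "D_chi \<chi> m m' = ray_len (ray_meet (ray_map (act \<chi> m) (axis \<chi>)) (ray_map (act \<chi> m') (axis \<chi>)))"

definition etree_iso :: "('v, 'm::monoid_mult) etree \<Rightarrow> ('w, 'm) etree \<Rightarrow> ('v \<Rightarrow> 'w) \<Rightarrow> bool" where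
  "etree_iso \<chi> \<chi>' f \<longleftrightarrow> bij_betw f (verts \<chi>) (verts \<chi>') \<and> elliptic_contraction \<chi> \<chi>' f \<and>
     ray_map f (axis \<chi>) = axis \<chi>' \<and>
     (\<forall>m. \<forall>v\<in>verts \<chi>. f (act \<chi> m v) = act \<chi>' m (f v))"

definition etree_isomorphic :: "('v, 'm::monoid_mult) etree \<Rightarrow> ('w, 'm) etree \<Rightarrow> bool" where
  "etree_isomorphic \<chi> \<chi>' \<longleftrightarrow> (\<exists>f. etree_iso \<chi> \<chi>' f)"

end

theory Submission
  imports Defs
begin


lemma successively_nth:
  "successively P xs \<longleftrightarrow> (\<forall>i. Suc i < length xs \<longrightarrow> P (xs!i) (xs!Suc i))"
proof (induction xs)
  case Nil then show ?case by simp
next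
  case (Cons x xs)
  show ?case
  proof (cases xs)
    case Nil then show ?thesis by simp
  next
    case (Cons y ys)
    have "(\<forall>i. Suc i < length (x#xs) \<longrightarrow> P ((x#xs)!i) ((x#xs)!Suc i)) \<longleftrightarrow>
          P x y \<and> (\<forall>i. Suc i < length xs \<longrightarrow> P (xs!i) (xs!Suc i))"
      using Cons by (auto simp: nth_Cons split: nat.splits)
    then show ?thesis using Cons \<open>successively P xs = _\<close> by simp
  qed
qed

definition tdep :: "'v \<Rightarrow> ('v \<Rightarrow> 'v) \<Rightarrow> 'v \<Rightarrow> nat" where
  "tdep r0 par v = (LEAST n. (par ^^ n) v = r0)"

definition walk :: "'v \<Rightarrow> 'v set \<Rightarrow> ('v \<Rightarrow> 'v) \<Rightarrow> 'v list \<Rightarrow> bool" where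
  "walk r0 V par xs \<longleftrightarrow> successively (tadj r0 V par) xs"

lemma tdist_walk:
  "tdist r0 V par u v = (LEAST n. \<exists>xs. length xs = Suc n \<and> hd xs = u \<and> last xs = v \<and> walk r0 V par xs)"
  unfolding tdist_def walk_def successively_nth by (metis Suc_less_eq)

lemma tadj_sym: "tadj r0 V par u v \<longleftrightarrow> tadj r0 V par v u"
  unfolding tadj_def by auto

context
  fixes r0 V par
  assumes rt: "rooted_tree r0 V par"
begin

lemma r0V: "r0 \<in> V" using rt unfolding rooted_tree_def by blast
lemma parV: "v \<in> V \<Longrightarrow> v \<noteq> r0 \<Longrightarrow> par v \<in> V" using rt unfolding rooted_tree_def by blast

lemma tdep_root: "v \<in> V \<Longrightarrow> (par ^^ tdep r0 par v) v = r0"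
proof -
  assume "v \<in> V"
  then have "\<exists>n. (par^^n) v = r0" using rt unfolding rooted_tree_def by blast
  then show ?thesis unfolding tdep_def by (rule LeastI_ex)
qed

lemma tdep_less: "k < tdep r0 par v \<Longrightarrow> (par ^^ k) v \<noteq> r0"
  unfolding tdep_def by (rule not_less_Least)

lemma tdep_V: "v \<in> V \<Longrightarrow> k \<le> tdep r0 par v \<Longrightarrow> (par ^^ k) v \<in> V"
proof (induction k)
  case 0 then show ?case by simp
next
  case (Suc k)
  then have "(par ^^ k) v \<in> V" "(par ^^ k) v \<noteq> r0" using tdep_less by auto
  then show ?case by (simp add: parV)
qed

lemma tdep_r0: "tdep r0 par r0 = 0"
  unfolding tdep_def by simp

lemma tdep_0: "v \<in> V \<Longrightarrow> tdep r0 par v = 0 \<longleftrightarrow> v = r0"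
  using tdep_root tdep_r0 by fastforce

lemma tdep_par: assumes "v \<in> V" "v \<noteq> r0"
  shows "tdep r0 par (par v) = tdep r0 par v - 1" "tdep r0 par v \<ge> 1"
proof -
  have nz: "tdep r0 par v \<noteq> 0" using tdep_0[OF assms(1)] assms(2) by blast
  then show g: "tdep r0 par v \<ge> 1" by simp
  have fs: "(par ^^ Suc k) v = (par ^^ k) (par v)" for k
    by (simp only: funpow_Suc_right o_apply)
  have "Suc (tdep r0 par v - 1) = tdep r0 par v" using nz by simp
  then have "(par ^^ (tdep r0 par v - 1)) (par v) = r0"
    using tdep_root[OF assms(1)] fs[of "tdep r0 par v - 1"] by simp
  moreover have "\<And>k. k < tdep r0 par v - 1 \<Longrightarrow> (par ^^ k) (par v) \<noteq> r0"
  proof -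
    fix k assume "k < tdep r0 par v - 1"
    then have "Suc k < tdep r0 par v" by simp
    then show "(par ^^ k) (par v) \<noteq> r0" using tdep_less fs by metis
  qed
  ultimately show "tdep r0 par (par v) = tdep r0 par v - 1"
    unfolding tdep_def[of r0 par "par v"] by (intro Least_equality) (auto simp: not_less[symmetric])
qed

lemma tadj_dep: "tadj r0 V par u v \<Longrightarrow>
   tdep r0 par v = tdep r0 par u + 1 \<or> tdep r0 par u = tdep r0 par v + 1"
  unfolding tadj_def using tdep_par by fastforce

lemma walk_dep:
  assumes "walk r0 V par xs" "k < length xs"
  shows "tdep r0 par (xs ! k) \<le> tdep r0 par (xs ! 0) + k"
  using assms(2)
proof (induction k)
  case 0 then show ?case by simp
next
  case (Suc k)
  then have "tadj r0 V par (xs!k) (xs!Suc k)" using assms(1) unfolding walk_def successively_nth by auto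
  from tadj_dep[OF this] have "tdep r0 par (xs!Suc k) \<le> tdep r0 par (xs!k) + 1" by auto
  moreover have "tdep r0 par (xs ! k) \<le> tdep r0 par (xs ! 0) + k" using Suc by simp
  ultimately show ?case by simp
qed

definition upwalk where "upwalk v = map (\<lambda>k. (par ^^ (tdep r0 par v - k)) v) [0..<Suc (tdep r0 par v)]"

lemma upwalk: assumes "v \<in> V"
  shows "length (upwalk v) = Suc (tdep r0 par v)" "hd (upwalk v) = r0" "last (upwalk v) = v"
    "walk r0 V par (upwalk v)"
proof -
  let ?d = "tdep r0 par v"
  show "length (upwalk v) = Suc ?d" by (simp add: upwalk_def)
  show "hd (upwalk v) = r0" using tdep_root[OF assms] by (simp add: upwalk_def hd_map del: upt_Suc)
  show "last (upwalk v) = v" by (simp add: upwalk_def last_map del: upt_Suc)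
  have "tadj r0 V par ((upwalk v)!i) ((upwalk v)!Suc i)" if "Suc i < Suc ?d" for i
  proof -
    have "?d - i = Suc (?d - Suc i)" using that by simp
    then have e: "(par ^^ (?d - i)) v = par ((par ^^ (?d - Suc i)) v)"
      by (simp only: funpow.simps(2) o_apply)
    have "(par ^^ (?d - Suc i)) v \<noteq> r0" using tdep_less that by (simp add: diff_less)
    moreover have "(par ^^ (?d - Suc i)) v \<in> V" "(par ^^ (?d - i)) v \<in> V" using tdep_V assms by auto
    ultimately show ?thesis using that e unfolding upwalk_def tadj_def
      by (simp del: upt_Suc add: nth_map)
  qed
  then show "walk r0 V par (upwalk v)" unfolding walk_def successively_nth
    by (simp add: upwalk_def del: upt_Suc)
qed

lemma tdepth_eq: assumes "v \<in> V" shows "tdepth r0 V par v = tdep r0 par v"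
  unfolding tdepth_def tdist_walk
proof (rule Least_equality)
  show "\<exists>xs. length xs = Suc (tdep r0 par v) \<and> hd xs = r0 \<and> last xs = v \<and> walk r0 V par xs"
    using upwalk[OF assms] by blast
next
  fix n assume "\<exists>xs. length xs = Suc n \<and> hd xs = r0 \<and> last xs = v \<and> walk r0 V par xs"
  then obtain xs where xs: "length xs = Suc n" "hd xs = r0" "last xs = v" "walk r0 V par xs" by blast
  have ne: "xs \<noteq> []" using xs(1) by auto
  have a: "xs ! n = v" using xs(1,3) ne by (simp add: last_conv_nth)
  have b: "xs ! 0 = r0" using xs(2) ne by (simp add: hd_conv_nth)
  have h: "tdep r0 par (xs ! n) \<le> tdep r0 par (xs ! 0) + n" by (rule walk_dep[OF xs(4)]) (simp add: xs(1))
  then show "tdep r0 par v \<le> n" using a b tdep_r0 by (metis add_0)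
qed

lemma connected: assumes "u \<in> V" "v \<in> V"
  shows "\<exists>n xs. length xs = Suc n \<and> hd xs = u \<and> last xs = v \<and> walk r0 V par xs"
proof -
  obtain ys where ys: "upwalk v = r0 # ys" using upwalk(1,2)[OF assms(2)] by (cases "upwalk v") auto
  let ?xs = "rev (upwalk u) @ ys"
  have w1: "walk r0 V par (rev (upwalk u))" using upwalk(4)[OF assms(1)]
    unfolding walk_def by (simp add: tadj_sym)
  have "walk r0 V par (r0 # ys)" using upwalk(4)[OF assms(2)] ys by simp
  then have w2: "successively (tadj r0 V par) ys" "ys \<noteq> [] \<Longrightarrow> tadj r0 V par r0 (hd ys)"
    unfolding walk_def successively_Cons by auto
  have lr: "last (rev (upwalk u)) = r0" using upwalk(2)[OF assms(1)] by (simp add: last_rev)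
  have ne: "upwalk u \<noteq> []" using upwalk(1)[OF assms(1)] by auto
  have "walk r0 V par ?xs" using w1 w2 lr unfolding walk_def successively_append_iff by auto
  moreover have "hd ?xs = u" using upwalk(3)[OF assms(1)] ne by (simp add: hd_rev)
  moreover have "last ?xs = v"
  proof (cases "ys = []")
    case True then show ?thesis using upwalk(3)[OF assms(2)] ys lr by simp
  next
    case False then show ?thesis using upwalk(3)[OF assms(2)] ys by simp
  qed
  moreover have "length ?xs = Suc (length ?xs - 1)" using ne by simp
  ultimately have "length ?xs = Suc (length ?xs - 1) \<and> hd ?xs = u \<and> last ?xs = v \<and> walk r0 V par ?xs"
    by (intro conjI)
  then show ?thesis by (intro exI)
qed

lemma tdist_walk_ex: assumes "u \<in> V" "v \<in> V"
  shows "\<exists>xs. length xs = Suc (tdist r0 V par u v) \<and> hd xs = u \<and> last xs = v \<and> walk r0 V par xs"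
proof -
  obtain n xs where "length xs = Suc n \<and> hd xs = u \<and> last xs = v \<and> walk r0 V par xs"
    using connected[OF assms] by blast
  then have "(\<lambda>n. \<exists>xs. length xs = Suc n \<and> hd xs = u \<and> last xs = v \<and> walk r0 V par xs) n" by blast
  then have "(\<lambda>n. \<exists>xs. length xs = Suc n \<and> hd xs = u \<and> last xs = v \<and> walk r0 V par xs)
     (LEAST n. \<exists>xs. length xs = Suc n \<and> hd xs = u \<and> last xs = v \<and> walk r0 V par xs)"
    by (rule LeastI)
  then show ?thesis unfolding tdist_walk by simp
qed

end



lemma tdep_r0' [simp]: "tdep r0 par r0 = 0" by (simp add: tdep_def)

lemma map_tree:
  assumes rt: "rooted_tree r0 V par" and rt': "rooted_tree r0' V' par'"
    and fV: "\<And>v. v \<in> V \<Longrightarrow> f v \<in> V'" and fr: "f r0 = r0'"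
    and fp: "\<And>v. v \<in> V \<Longrightarrow> v \<noteq> r0 \<Longrightarrow> f v \<noteq> r0' \<and> f (par v) = par' (f v)"
  shows "v \<in> V \<Longrightarrow> tdep r0' par' (f v) = tdep r0 par v"
    and "u \<in> V \<Longrightarrow> v \<in> V \<Longrightarrow> tdist r0' V' par' (f u) (f v) \<le> tdist r0 V par u v"
proof -
  have "\<forall>v. v \<in> V \<and> tdep r0 par v = n \<longrightarrow> tdep r0' par' (f v) = n" for n
  proof (induction n)
    case 0
    show ?case
    proof (intro allI impI)
      fix v assume h: "v \<in> V \<and> tdep r0 par v = 0"
      then have "v = r0" using tdep_0[OF rt] by blast
      then show "tdep r0' par' (f v) = 0" using fr tdep_r0' by simp
    qed
  next
    case (Suc n)
    show ?case
    proof (intro allI impI)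
      fix v assume h: "v \<in> V \<and> tdep r0 par v = Suc n"
      then have v: "v \<in> V" "v \<noteq> r0" by auto
      have pv: "par v \<in> V" using parV[OF rt v] .
      have "tdep r0 par (par v) = n" using tdep_par(1)[OF rt v] h by simp
      then have "tdep r0' par' (f (par v)) = n" using Suc pv by blast
      then have e: "tdep r0' par' (par' (f v)) = n" using fp[OF v] by simp
      have fv: "f v \<in> V'" "f v \<noteq> r0'" using fV[OF v(1)] fp[OF v] by auto
      show "tdep r0' par' (f v) = Suc n" using tdep_par[OF rt' fv] e by simp
    qed
  qed
  then show "v \<in> V \<Longrightarrow> tdep r0' par' (f v) = tdep r0 par v" by blast
next
  assume u: "u \<in> V" and v: "v \<in> V"
  obtain xs where xs: "length xs = Suc (tdist r0 V par u v)" "hd xs = u" "last xs = v" "walk r0 V par xs"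
    using tdist_walk_ex[OF rt u v] by blast
  have ne: "xs \<noteq> []" using xs(1) by auto
  have adj: "tadj r0' V' par' (f x) (f y)" if "tadj r0 V par x y" for x y
    using that fV fp unfolding tadj_def by metis
  have "walk r0' V' par' (map f xs)" using xs(4) unfolding walk_def successively_map
    by (rule successively_mono) (rule adj)
  moreover have "length (map f xs) = Suc (tdist r0 V par u v)" "hd (map f xs) = f u" "last (map f xs) = f v"
    using xs ne by (simp_all add: hd_map last_map)
  ultimately have "\<exists>ys. length ys = Suc (tdist r0 V par u v) \<and> hd ys = f u \<and> last ys = f v \<and> walk r0' V' par' ys"
    by blast
  then show "tdist r0' V' par' (f u) (f v) \<le> tdist r0 V par u v"
    unfolding tdist_walk[of r0' V' par'] by (rule Least_le)
qed

lemma ray_len_iff: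
  assumes "\<rho> 0 \<noteq> None" "\<And>i. \<rho> i = None \<Longrightarrow> \<rho> (Suc i) = None"
  shows "\<rho> i \<noteq> None \<longleftrightarrow> enat i \<le> ray_len \<rho>"
proof -
  have mono: "\<rho> j = None" if "\<rho> i = None" "i \<le> j" for i j
    using that(2,1) by (induction j rule: dec_induct) (auto intro: assms(2))
  show ?thesis
  proof (cases "\<forall>i. \<rho> i \<noteq> None")
    case True then show ?thesis by (simp add: ray_len_def)
  next
    case False
    then obtain i0 where "\<rho> i0 = None" by blast
    with assms(1) obtain k0 where k0: "\<rho> (Suc k0) = None" by (cases i0) auto
    let ?k = "LEAST k. \<rho> (Suc k) = None"
    have rl: "ray_len \<rho> = enat ?k" using False by (simp add: ray_len_def)
    have kN: "\<rho> (Suc ?k) = None" using k0 by (rule LeastI)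
    have "\<rho> i \<noteq> None \<longleftrightarrow> i \<le> ?k"
    proof
      assume h: "\<rho> i \<noteq> None"
      show "i \<le> ?k"
      proof (rule ccontr)
        assume "\<not> i \<le> ?k" then have "Suc ?k \<le> i" by simp
        from mono[OF kN this] show False using h by simp
      qed
    next
      assume h: "i \<le> ?k"
      show "\<rho> i \<noteq> None"
      proof (cases i)
        case 0 then show ?thesis using assms(1) by simp
      next
        case (Suc j)
        then have "j < ?k" using h by simp
        then show ?thesis using not_less_Least[of j "\<lambda>k. \<rho> (Suc k) = None"] Suc by blast
      qed
    qed
    then show ?thesis using rl by simp
  qed
qed

lemma enat_ext_le: assumes "\<And>i. enat i \<le> x \<Longrightarrow> enat i \<le> y" shows "x \<le> y"
proof (cases x)
  case (enat a) then show ?thesis using assms[of a] by simp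
next
  case infinity
  have "y = \<infinity>"
  proof (cases y)
    case (enat b) then have False using assms[of "Suc b"] infinity by simp
    then show ?thesis ..
  qed simp
  then show ?thesis by simp
qed

lemma enat_ext: assumes "\<And>i. enat i \<le> x \<longleftrightarrow> enat i \<le> y" shows "x = y"
  by (rule order_antisym; rule enat_ext_le) (simp_all add: assms)

locale ET =
  fixes \<chi> :: "('v, 'm::monoid_mult) etree"
  assumes ell: "elliptic_tree \<chi>"
begin

definition a :: "nat \<Rightarrow> 'v" where "a i = the (axis \<chi> i)"

lemma rt: "rooted_tree (root \<chi>) (verts \<chi>) (parent \<chi>)"
  using ell unfolding elliptic_tree_def uniform_tree_def by blast
lemma ray: "is_ray (root \<chi>) (verts \<chi>) (parent \<chi>) (axis \<chi>)"
  using ell unfolding elliptic_tree_def maximal_ray_def by blast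
lemma ec: "elliptic_contraction \<chi> \<chi> (act \<chi> m)"
  using ell unfolding elliptic_tree_def by blast
lemma act1: "v \<in> verts \<chi> \<Longrightarrow> act \<chi> 1 v = v"
  using ell unfolding elliptic_tree_def by blast
lemma actmult: "v \<in> verts \<chi> \<Longrightarrow> act \<chi> (m * m') v = act \<chi> m' (act \<chi> m v)"
  using ell unfolding elliptic_tree_def by blast
lemma vertsEq: "verts \<chi> = {act \<chi> m v | m v. \<exists>i. axis \<chi> i = Some v}"
  using ell unfolding elliptic_tree_def by blast

lemma actV: "v \<in> verts \<chi> \<Longrightarrow> act \<chi> m v \<in> verts \<chi>"
  using ec unfolding elliptic_contraction_def by blast

lemma act_dp: assumes "v \<in> verts \<chi>"
  shows "tdep (root \<chi>) (parent \<chi>) (act \<chi> m v) = tdep (root \<chi>) (parent \<chi>) v"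
proof -
  have "edepth \<chi> (act \<chi> m v) = edepth \<chi> v" using ec[of m] assms unfolding elliptic_contraction_def by blast
  then show ?thesis using tdepth_eq[OF rt assms] tdepth_eq[OF rt actV[OF assms]] by simp
qed

lemma act_dist: "u \<in> verts \<chi> \<Longrightarrow> v \<in> verts \<chi> \<Longrightarrow> edist \<chi> (act \<chi> m u) (act \<chi> m v) \<le> edist \<chi> u v"
  using ec[of m] unfolding elliptic_contraction_def by blast

lemma act_root: "act \<chi> m (root \<chi>) = root \<chi>"
proof -
  have r: "root \<chi> \<in> verts \<chi>" using r0V[OF rt] .
  have "tdep (root \<chi>) (parent \<chi>) (act \<chi> m (root \<chi>)) = 0" using act_dp[OF r] tdep_r0' by simp
  then show ?thesis using tdep_0[OF rt actV[OF r]] by blast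
qed

lemma act_par: assumes v: "v \<in> verts \<chi>" "v \<noteq> root \<chi>"
  shows "act \<chi> m v \<noteq> root \<chi>" "act \<chi> m (parent \<chi> v) = parent \<chi> (act \<chi> m v)"
proof -
  let ?r = "root \<chi>" and ?V = "verts \<chi>" and ?P = "parent \<chi>"
  let ?dp = "tdep ?r ?P"
  have pv: "?P v \<in> ?V" using parV[OF rt v] .
  have d1: "?dp v \<ge> 1" and dpv: "?dp (?P v) = ?dp v - 1" using tdep_par[OF rt v] by auto
  show ne: "act \<chi> m v \<noteq> ?r"
  proof
    assume "act \<chi> m v = ?r"
    then have "?dp (act \<chi> m v) = 0" using tdep_r0' by simp
    then show False using act_dp[OF v(1)] d1 by simp
  qed
  have "tadj ?r ?V ?P (?P v) v" unfolding tadj_def using pv v by simp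
  then have w: "walk ?r ?V ?P [?P v, v]" unfolding walk_def by simp
  have "\<exists>xs. length xs = Suc 1 \<and> hd xs = ?P v \<and> last xs = v \<and> walk ?r ?V ?P xs"
    using w by (intro exI[of _ "[?P v, v]"]) simp
  then have "tdist ?r ?V ?P (?P v) v \<le> 1" unfolding tdist_walk by (rule Least_le)
  then have le1: "tdist ?r ?V ?P (act \<chi> m (?P v)) (act \<chi> m v) \<le> 1"
    using act_dist[OF pv v(1), of m] by linarith
  let ?x = "act \<chi> m (?P v)" and ?y = "act \<chi> m v"
  have xV: "?x \<in> ?V" and yV: "?y \<in> ?V" using actV pv v by auto
  have dx: "?dp ?x = ?dp v - 1" using act_dp[OF pv] dpv by simp
  have dy: "?dp ?y = ?dp v" using act_dp[OF v(1)] .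
  obtain xs where xs: "length xs = Suc (tdist ?r ?V ?P ?x ?y)" "hd xs = ?x" "last xs = ?y" "walk ?r ?V ?P xs"
    using tdist_walk_ex[OF rt xV yV] by blast
  have ne': "xs \<noteq> []" using xs(1) by auto
  show "?x = ?P ?y"
  proof (cases "tdist ?r ?V ?P ?x ?y = 0")
    case True
    then have "length xs = 1" using xs(1) by simp
    then have "hd xs = last xs" by (cases xs) auto
    then have "?x = ?y" using xs by simp
    then show ?thesis using dx dy d1 by simp
  next
    case False
    then have l2: "length xs = 2" using xs(1) le1 by simp
    have "hd xs = xs ! 0" "last xs = xs ! 1" using ne' l2 by (simp_all add: hd_conv_nth last_conv_nth)
    moreover have "tadj ?r ?V ?P (xs ! 0) (xs ! Suc 0)" using xs(4) l2 unfolding walk_def successively_nth by simp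
    ultimately have t: "tadj ?r ?V ?P ?x ?y" using xs(2,3) by simp
    show ?thesis
    proof (cases "?x \<noteq> ?r \<and> ?P ?x = ?y")
      case True
      then have "?dp ?y = ?dp ?x - 1" using tdep_par(1)[OF rt xV] by simp
      then show ?thesis using dx dy d1 by simp
    next
      case False
      then show ?thesis using t unfolding tadj_def by auto
    qed
  qed
qed

lemma ax0: "axis \<chi> 0 = Some (root \<chi>)" using ray unfolding is_ray_def by blast
lemma axdown: "axis \<chi> i = None \<Longrightarrow> axis \<chi> (Suc i) = None" using ray unfolding is_ray_def by blast
lemma axSuc: "axis \<chi> (Suc i) = Some w \<Longrightarrow> w \<in> verts \<chi> \<and> w \<noteq> root \<chi> \<and> axis \<chi> i = Some (parent \<chi> w)"
  using ray unfolding is_ray_def by blast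

lemma ax_some: "axis \<chi> i \<noteq> None \<Longrightarrow> axis \<chi> i = Some (a i) \<and> a i \<in> verts \<chi> \<and> tdep (root \<chi>) (parent \<chi>) (a i) = i"
proof (induction i)
  case 0 then show ?case using ax0 r0V[OF rt] tdep_r0' by (simp add: a_def)
next
  case (Suc i)
  then obtain w where w: "axis \<chi> (Suc i) = Some w" by blast
  note ws = axSuc[OF w]
  then have IH: "a i = parent \<chi> w" "tdep (root \<chi>) (parent \<chi>) (parent \<chi> w) = i" using Suc.IH by (auto simp: a_def)
  have "tdep (root \<chi>) (parent \<chi>) w = Suc i" using tdep_par[OF rt, of w] ws IH(2) by simp
  then show ?case using w ws by (simp add: a_def)
qed

lemma ax_mono: "axis \<chi> i \<noteq> None \<Longrightarrow> j \<le> i \<Longrightarrow> axis \<chi> j \<noteq> None"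
proof -
  assume h: "axis \<chi> i \<noteq> None" "j \<le> i"
  have "axis \<chi> j = None \<Longrightarrow> axis \<chi> k = None" if "j \<le> k" for k
    using that by (induction k rule: dec_induct) (auto intro: axdown)
  from this[OF h(2)] show ?thesis using h(1) by blast
qed

lemma a_par: assumes "axis \<chi> (Suc i) \<noteq> None"
  shows "parent \<chi> (a (Suc i)) = a i" "a (Suc i) \<noteq> root \<chi>" "a (Suc i) \<in> verts \<chi>"
proof -
  obtain w where w: "axis \<chi> (Suc i) = Some w" using assms by blast
  have "axis \<chi> i \<noteq> None" using axSuc[OF w] by simp
  then show "parent \<chi> (a (Suc i)) = a i" "a (Suc i) \<noteq> root \<chi>" "a (Suc i) \<in> verts \<chi>"
    using axSuc[OF w] ax_some w by (auto simp: a_def)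
qed

lemma down: assumes "axis \<chi> i \<noteq> None" "j \<le> i" "act \<chi> m (a i) = act \<chi> m' (a i)"
  shows "act \<chi> m (a j) = act \<chi> m' (a j)"
  using assms(2,3)
proof (induction j rule: inc_induct)
  case base then show ?case .
next
  case (step n)
  have s: "axis \<chi> (Suc n) \<noteq> None" using ax_mono[OF assms(1)] step(2) by simp
  note ap = a_par[OF s]
  have "act \<chi> m (a n) = parent \<chi> (act \<chi> m (a (Suc n)))" using act_par[OF ap(3,2)] ap(1) by simp
  also have "\<dots> = parent \<chi> (act \<chi> m' (a (Suc n)))" using step by simp
  also have "\<dots> = act \<chi> m' (a n)" using act_par[OF ap(3,2)] ap(1) by simp
  finally show ?case .
qed

lemma KEY: "enat i \<le> D_chi \<chi> m m' \<longleftrightarrow> axis \<chi> i \<noteq> None \<and> act \<chi> m (a i) = act \<chi> m' (a i)"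
proof -
  let ?\<rho> = "ray_map (act \<chi> m) (axis \<chi>)" and ?\<sigma> = "ray_map (act \<chi> m') (axis \<chi>)"
  let ?\<mu> = "ray_meet ?\<rho> ?\<sigma>"
  have rho: "?\<rho> j = map_option (act \<chi> m) (axis \<chi> j)" "?\<sigma> j = map_option (act \<chi> m') (axis \<chi> j)" for j
    by (simp_all add: ray_map_def)
  have mu: "?\<mu> j = (if \<forall>k\<le>j. ?\<rho> k = ?\<sigma> k then ?\<rho> j else None)" for j by (simp add: ray_meet_def)
  have m0: "?\<mu> 0 \<noteq> None" using mu[of 0] rho ax0 act_root by simp
  have md: "?\<mu> (Suc j) = None" if "?\<mu> j = None" for j
  proof (cases "\<forall>k\<le>j. ?\<rho> k = ?\<sigma> k")
    case True
    then have "axis \<chi> j = None" using that mu[of j] rho by simp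
    then show ?thesis using axdown mu[of "Suc j"] rho by simp
  next
    case False
    then show ?thesis using mu[of "Suc j"] by auto
  qed
  have "enat i \<le> D_chi \<chi> m m' \<longleftrightarrow> ?\<mu> i \<noteq> None"
    unfolding D_chi_def using ray_len_iff[of ?\<mu>, OF m0 md] by simp
  also have "\<dots> \<longleftrightarrow> axis \<chi> i \<noteq> None \<and> act \<chi> m (a i) = act \<chi> m' (a i)"
  proof
    assume h: "?\<mu> i \<noteq> None"
    then have "\<forall>k\<le>i. ?\<rho> k = ?\<sigma> k" "?\<rho> i \<noteq> None" using mu[of i] by (auto split: if_splits)
    then show "axis \<chi> i \<noteq> None \<and> act \<chi> m (a i) = act \<chi> m' (a i)"
      using rho[of i] ax_some[of i] by auto
  next
    assume h: "axis \<chi> i \<noteq> None \<and> act \<chi> m (a i) = act \<chi> m' (a i)"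
    have "?\<rho> k = ?\<sigma> k" if "k \<le> i" for k
    proof -
      have "axis \<chi> k \<noteq> None" using ax_mono h that by blast
      then have ak: "axis \<chi> k = Some (a k)" using ax_some by blast
      have "act \<chi> m (a k) = act \<chi> m' (a k)" using down[OF conjunct1[OF h] that conjunct2[OF h]] .
      then show ?thesis unfolding rho ak by simp
    qed
    moreover have "?\<rho> i \<noteq> None" using h rho by simp
    ultimately show "?\<mu> i \<noteq> None" using mu[of i] by simp
  qed
  finally show ?thesis .
qed

lemma vert_form: "v \<in> verts \<chi> \<Longrightarrow> \<exists>m i. axis \<chi> i \<noteq> None \<and> v = act \<chi> m (a i)"
proof -
  assume "v \<in> verts \<chi>"
  then obtain m w i where "v = act \<chi> m w" "axis \<chi> i = Some w" using vertsEq by blast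
  then show ?thesis using ax_some[of i] by (intro exI[of _ m] exI[of _ i]) auto
qed

lemma alive: "axis \<chi> i \<noteq> None \<longleftrightarrow> enat i \<le> D_chi \<chi> 1 1"
  using KEY by simp

lemma strict: assumes sf: "strongly_faithful \<chi>" shows "strict_length_function (D_chi \<chi>)"
  unfolding strict_length_function_def length_function_def
proof (intro conjI allI impI)
  fix m m' m''
  show "D_chi \<chi> m m' = D_chi \<chi> m' m" by (rule enat_ext) (auto simp: KEY)
  show "D_chi \<chi> m' m'' \<le> D_chi \<chi> m m" by (rule enat_ext_le) (simp add: KEY)
  show "D_chi \<chi> m' m'' \<le> D_chi \<chi> (m' * m) (m'' * m)"
  proof (rule enat_ext_le)
    fix i assume "enat i \<le> D_chi \<chi> m' m''"
    then have h: "axis \<chi> i \<noteq> None" "act \<chi> m' (a i) = act \<chi> m'' (a i)" using KEY by auto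
    then have "act \<chi> (m' * m) (a i) = act \<chi> (m'' * m) (a i)" using actmult ax_some by metis
    then show "enat i \<le> D_chi \<chi> (m' * m) (m'' * m)" using KEY h by simp
  qed
  show "min (D_chi \<chi> m m') (D_chi \<chi> m' m'') \<le> D_chi \<chi> m m''"
    by (rule enat_ext_le) (auto simp: KEY)
  assume eq: "D_chi \<chi> m' m'' = D_chi \<chi> m m"
  have "ray_map (act \<chi> m') (axis \<chi>) = ray_map (act \<chi> m'') (axis \<chi>)"
  proof
    fix j
    show "ray_map (act \<chi> m') (axis \<chi>) j = ray_map (act \<chi> m'') (axis \<chi>) j"
    proof (cases "axis \<chi> j = None")
      case True then show ?thesis by (simp add: ray_map_def)
    next
      case False
      then have "enat j \<le> D_chi \<chi> m m" using KEY by simp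
      then have "enat j \<le> D_chi \<chi> m' m''" using eq by simp
      then have "act \<chi> m' (a j) = act \<chi> m'' (a j)" using KEY by blast
      moreover have "axis \<chi> j = Some (a j)" using ax_some False by blast
      ultimately show ?thesis by (simp add: ray_map_def)
    qed
  qed
  then show "m' = m''" using sf unfolding strongly_faithful_def by blast
qed

end



lemma iso:
  fixes \<chi> :: "('v, 'm::monoid_mult) etree" and \<chi>' :: "('w, 'm) etree"
  assumes E: "elliptic_tree \<chi>" and E': "elliptic_tree \<chi>'" and DD: "D_chi \<chi> = D_chi \<chi>'"
  shows "etree_isomorphic \<chi> \<chi>'"
proof -
  interpret X: ET \<chi> by (rule ET.intro[OF E])
  interpret Y: ET \<chi>' by (rule ET.intro[OF E'])
  let ?dp = "tdep (root \<chi>) (parent \<chi>)"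
  let ?dp' = "tdep (root \<chi>') (parent \<chi>')"
  have al: "axis \<chi> i \<noteq> None \<longleftrightarrow> axis \<chi>' i \<noteq> None" for i
    using X.alive Y.alive DD by simp
  have K: "(axis \<chi> i \<noteq> None \<and> act \<chi> m (X.a i) = act \<chi> m' (X.a i)) \<longleftrightarrow>
           (axis \<chi>' i \<noteq> None \<and> act \<chi>' m (Y.a i) = act \<chi>' m' (Y.a i))" for i m m'
    using X.KEY[of i m m'] Y.KEY[of i m m'] DD by simp
  define f where "f v = act \<chi>' (SOME m. v = act \<chi> m (X.a (?dp v))) (Y.a (?dp v))" for v
  have dpv: "?dp (act \<chi> m (X.a i)) = i" if "axis \<chi> i \<noteq> None" for m i
    using X.act_dp X.ax_some that by simp
  have dpv': "?dp' (act \<chi>' m (Y.a i)) = i" if "axis \<chi>' i \<noteq> None" for m i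
    using Y.act_dp Y.ax_some that by simp
  have fval: "f (act \<chi> m (X.a i)) = act \<chi>' m (Y.a i)" if ai: "axis \<chi> i \<noteq> None" for m i
  proof -
    let ?v = "act \<chi> m (X.a i)"
    let ?m0 = "SOME m. ?v = act \<chi> m (X.a (?dp ?v))"
    have "\<exists>m0. ?v = act \<chi> m0 (X.a (?dp ?v))" using dpv[OF ai] by auto
    then have "?v = act \<chi> ?m0 (X.a (?dp ?v))" by (rule someI_ex)
    then have "act \<chi> ?m0 (X.a i) = act \<chi> m (X.a i)" using dpv[OF ai] by simp
    then have "act \<chi>' ?m0 (Y.a i) = act \<chi>' m (Y.a i)" using K ai by blast
    then show ?thesis unfolding f_def using dpv[OF ai] by simp
  qed
  have aV: "X.a i \<in> verts \<chi>" if "axis \<chi> i \<noteq> None" for i using X.ax_some that by blast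
  have aV': "Y.a i \<in> verts \<chi>'" if "axis \<chi>' i \<noteq> None" for i using Y.ax_some that by blast
  have fV: "f v \<in> verts \<chi>'" if v: "v \<in> verts \<chi>" for v
  proof -
    obtain m i where mi: "axis \<chi> i \<noteq> None" "v = act \<chi> m (X.a i)" using X.vert_form[OF v] by blast
    then show ?thesis using fval Y.actV aV' al by simp
  qed
  have inj: "inj_on f (verts \<chi>)"
  proof
    fix u v assume u: "u \<in> verts \<chi>" and v: "v \<in> verts \<chi>" and e: "f u = f v"
    obtain m i where mi: "axis \<chi> i \<noteq> None" "u = act \<chi> m (X.a i)" using X.vert_form[OF u] by blast
    obtain m' j where mj: "axis \<chi> j \<noteq> None" "v = act \<chi> m' (X.a j)" using X.vert_form[OF v] by blast
    have e2: "act \<chi>' m (Y.a i) = act \<chi>' m' (Y.a j)" using e fval mi mj by simp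
    have "i = j" using dpv'[of i m] dpv'[of j m'] e2 al mi(1) mj(1) by metis
    then have "act \<chi>' m (Y.a i) = act \<chi>' m' (Y.a i)" using e2 by simp
    then have "act \<chi> m (X.a i) = act \<chi> m' (X.a i)" using K mi(1) al by blast
    then show "u = v" using mi mj \<open>i = j\<close> by simp
  qed
  have img: "f ` verts \<chi> = verts \<chi>'"
  proof
    show "f ` verts \<chi> \<subseteq> verts \<chi>'" using fV by blast
    show "verts \<chi>' \<subseteq> f ` verts \<chi>"
    proof
      fix w assume "w \<in> verts \<chi>'"
      then obtain m i where mi: "axis \<chi>' i \<noteq> None" "w = act \<chi>' m (Y.a i)" using Y.vert_form by blast
      then have "axis \<chi> i \<noteq> None" using al by simp
      then have "w = f (act \<chi> m (X.a i))" "act \<chi> m (X.a i) \<in> verts \<chi>" using fval mi X.actV aV by auto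
      then show "w \<in> f ` verts \<chi>" by blast
    qed
  qed
  have a0: "X.a 0 = root \<chi>" "Y.a 0 = root \<chi>'" using X.ax_some[of 0] Y.ax_some[of 0] X.ax0 Y.ax0 by auto
  have fr: "f (root \<chi>) = root \<chi>'"
  proof -
    have "f (root \<chi>) = f (act \<chi> 1 (X.a 0))" using X.act1 a0 r0V[OF X.rt] by simp
    also have "\<dots> = act \<chi>' 1 (Y.a 0)" using fval X.ax0 by simp
    also have "\<dots> = root \<chi>'" using Y.act1 a0 r0V[OF Y.rt] by simp
    finally show ?thesis .
  qed
  have fp: "f v \<noteq> root \<chi>' \<and> f (parent \<chi> v) = parent \<chi>' (f v)"
    if v: "v \<in> verts \<chi>" "v \<noteq> root \<chi>" for v
  proof -
    obtain m i where mi: "axis \<chi> i \<noteq> None" "v = act \<chi> m (X.a i)" using X.vert_form[OF v(1)] by blast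
    have "i \<noteq> 0"
    proof
      assume "i = 0"
      then have "v = root \<chi>" using mi(2) X.act_root a0 by simp
      then show False using v(2) by simp
    qed
    then obtain k where k: "i = Suc k" by (cases i) auto
    have ak: "axis \<chi> (Suc k) \<noteq> None" "axis \<chi>' (Suc k) \<noteq> None" using mi k al by auto
    have akk: "axis \<chi> k \<noteq> None" using X.ax_mono[OF ak(1)] by simp
    have fv: "f v = act \<chi>' m (Y.a (Suc k))" using fval mi k by simp
    have "f v \<noteq> root \<chi>'"
    proof
      assume "f v = root \<chi>'"
      then have "?dp' (f v) = 0" by simp
      then show False using dpv'[OF ak(2)] fv by simp
    qed
    moreover have "parent \<chi> v = act \<chi> m (X.a k)"
      using X.act_par[OF X.a_par(3,2)[OF ak(1)]] X.a_par(1)[OF ak(1)] mi k by simp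
    moreover have "parent \<chi>' (f v) = act \<chi>' m (Y.a k)"
      using Y.act_par[OF Y.a_par(3,2)[OF ak(2)]] Y.a_par(1)[OF ak(2)] fv by simp
    ultimately show ?thesis using fval[OF akk] by simp
  qed
  have mt1: "?dp' (f v) = ?dp v" if v: "v \<in> verts \<chi>" for v
    by (rule map_tree(1)[where f=f, OF X.rt Y.rt]) (use fV fr fp v in auto)
  have mt2: "edist \<chi>' (f u) (f v) \<le> edist \<chi> u v" if u: "u \<in> verts \<chi>" and v: "v \<in> verts \<chi>" for u v
    by (rule map_tree(2)[where f=f, OF X.rt Y.rt]) (use fV fr fp u v in auto)
  have ec: "elliptic_contraction \<chi> \<chi>' f"
    unfolding elliptic_contraction_def
  proof (intro conjI ballI)
    show "f ` verts \<chi> \<subseteq> verts \<chi>'" using img by simp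
    fix v assume v: "v \<in> verts \<chi>"
    show "edepth \<chi>' (f v) = edepth \<chi> v"
      using tdepth_eq[OF X.rt v] tdepth_eq[OF Y.rt fV[OF v]] mt1[OF v] by simp
    fix u assume u: "u \<in> verts \<chi>"
    show "edist \<chi>' (f v) (f u) \<le> edist \<chi> v u" using mt2[OF v u] .
  qed
  have rm: "ray_map f (axis \<chi>) = axis \<chi>'"
  proof
    fix i
    show "ray_map f (axis \<chi>) i = axis \<chi>' i"
    proof (cases "axis \<chi> i = None")
      case True then show ?thesis using al[of i] by (simp add: ray_map_def)
    next
      case False
      then have "axis \<chi> i = Some (X.a i)" "axis \<chi>' i = Some (Y.a i)" using X.ax_some Y.ax_some al by blast+
      moreover have "f (X.a i) = Y.a i"
        using fval[OF False, of 1] X.act1[OF aV[OF False]] Y.act1[OF aV'] al False by simp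
      ultimately show ?thesis by (simp add: ray_map_def)
    qed
  qed
  have eqv: "f (act \<chi> n v) = act \<chi>' n (f v)" if v: "v \<in> verts \<chi>" for n v
  proof -
    obtain m i where mi: "axis \<chi> i \<noteq> None" "v = act \<chi> m (X.a i)" using X.vert_form[OF v] by blast
    have "act \<chi> n v = act \<chi> (m * n) (X.a i)" using X.actmult aV mi by simp
    then have "f (act \<chi> n v) = act \<chi>' (m * n) (Y.a i)" using fval mi by simp
    also have "\<dots> = act \<chi>' n (act \<chi>' m (Y.a i))" using Y.actmult aV' al mi by simp
    finally show ?thesis using fval mi by simp
  qed
  have "etree_iso \<chi> \<chi>' f" unfolding etree_iso_def bij_betw_def using inj img ec rm eqv by blast
  then show ?thesis unfolding etree_isomorphic_def by blast
qed



definition cls :: "('m \<Rightarrow> 'm \<Rightarrow> enat) \<Rightarrow> nat \<Rightarrow> 'm \<Rightarrow> 'm set" where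
  "cls D i m = {x. enat i \<le> D m x}"

definition rep :: "'m set \<Rightarrow> 'm" where "rep C = (SOME c. c \<in> C)"

definition cV :: "('m::monoid_mult \<Rightarrow> 'm \<Rightarrow> enat) \<Rightarrow> (nat \<times> 'm set) set" where
  "cV D = {(i, cls D i m) | i m. enat i \<le> D 1 1}"

definition cP :: "('m \<Rightarrow> 'm \<Rightarrow> enat) \<Rightarrow> nat \<times> 'm set \<Rightarrow> nat \<times> 'm set" where
  "cP D v = (fst v - 1, cls D (fst v - 1) (rep (snd v)))"

definition cA :: "('m::monoid_mult \<Rightarrow> 'm \<Rightarrow> enat) \<Rightarrow> 'm \<Rightarrow> nat \<times> 'm set \<Rightarrow> nat \<times> 'm set" where
  "cA D n v = (fst v, cls D (fst v) (rep (snd v) * n))"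

definition cax :: "('m::monoid_mult \<Rightarrow> 'm \<Rightarrow> enat) \<Rightarrow> nat \<Rightarrow> (nat \<times> 'm set) option" where
  "cax D i = (if enat i \<le> D 1 1 then Some (i, cls D i 1) else None)"

definition ctree :: "('m::monoid_mult \<Rightarrow> 'm \<Rightarrow> enat) \<Rightarrow> (nat \<times> 'm set, 'm) etree" where
  "ctree D = \<lparr>root = (0, UNIV), verts = cV D, parent = cP D, axis = cax D, act = cA D\<rparr>"

context
  fixes D :: "'m::monoid_mult \<Rightarrow> 'm \<Rightarrow> enat"
  assumes slf: "strict_length_function D"
begin

lemma LFs: "length_function D" "\<forall>m m' m''. D m' m'' = D m m \<longrightarrow> m' = m''"
  using slf unfolding strict_length_function_def by (rule conjunct1, rule conjunct2)
lemma LFparts: "\<forall>m m'. D m m' = D m' m" "\<forall>m m' m''. D m' m'' \<le> D m m"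
  "\<forall>m m' m''. D m' m'' \<le> D (m' * m) (m'' * m)" "\<forall>m m' m''. D m m'' \<ge> min (D m m') (D m' m'')"
  using LFs(1) unfolding length_function_def by (rule conjunct1, rule conjunct1[OF conjunct2],
     rule conjunct1[OF conjunct2[OF conjunct2]], rule conjunct2[OF conjunct2[OF conjunct2]])
lemma L1: "D m m' = D m' m" using LFparts(1) by metis
lemma L2: "D m' m'' \<le> D m m" using LFparts(2) by metis
lemma L3: "D m' m'' \<le> D (m' * m) (m'' * m)" using LFparts(3) by metis
lemma L4: "D m m'' \<ge> min (D m m') (D m' m'')" using LFparts(4) by metis
lemma L5: "D m' m'' = D m m \<Longrightarrow> m' = m''" using LFs(2) by metis

lemma Dself: "D m m = D 1 1" using L2[of m m 1] L2[of 1 1 m] by (rule order_antisym)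
lemma DleL: "D m m' \<le> D 1 1" using L2[of m m' 1] .

lemma cls_mem: "enat i \<le> D 1 1 \<Longrightarrow> m \<in> cls D i m"
  unfolding cls_def using Dself[of m] by simp

lemma cls_eq: assumes "enat i \<le> D 1 1" shows "cls D i m = cls D i m' \<longleftrightarrow> enat i \<le> D m m'"
proof
  assume "cls D i m = cls D i m'"
  then have "m' \<in> cls D i m" using cls_mem[OF assms, of m'] by simp
  then show "enat i \<le> D m m'" unfolding cls_def by simp
next
  assume h: "enat i \<le> D m m'"
  have tr: "enat i \<le> D p x" if "enat i \<le> D p q" "enat i \<le> D q x" for p q x
    using L4[of p q x] that by (simp add: min_def split: if_splits)
  have h': "enat i \<le> D m' m" using h L1 by simp
  show "cls D i m = cls D i m'" unfolding cls_def using tr h h' by blast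
qed

lemma rep_cls: "enat i \<le> D 1 1 \<Longrightarrow> rep (cls D i m) \<in> cls D i m"
  unfolding rep_def using cls_mem by (metis someI)

lemma cls_mono: assumes "enat i \<le> D 1 1" "j \<le> i" "c \<in> cls D i m" shows "cls D j c = cls D j m"
proof -
  have "enat j \<le> D 1 1" using assms(1,2) by (meson enat_ord_simps(1) order_trans)
  moreover have "enat j \<le> D m c" using assms(2,3) unfolding cls_def by (meson enat_ord_simps(1) order_trans mem_Collect_eq)
  ultimately show ?thesis using cls_eq L1 by metis
qed

lemma cls0: "cls D 0 m = UNIV" unfolding cls_def by (simp add: zero_enat_def[symmetric])

lemma Lmono: "enat i \<le> D 1 1 \<Longrightarrow> j \<le> i \<Longrightarrow> enat j \<le> D 1 1"
  by (meson enat_ord_simps(1) order_trans)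

lemma cP_cls: "enat i \<le> D 1 1 \<Longrightarrow> cP D (i, cls D i m) = (i - 1, cls D (i - 1) m)"
  unfolding cP_def using cls_mono rep_cls by simp

lemma cA_cls: assumes "enat i \<le> D 1 1" shows "cA D n (i, cls D i m) = (i, cls D i (m * n))"
proof -
  let ?c = "rep (cls D i m)"
  have "enat i \<le> D m ?c" using rep_cls[OF assms] unfolding cls_def by simp
  then have "enat i \<le> D (m * n) (?c * n)" using L3[of m ?c n] by (meson order_trans)
  then have "cls D i (?c * n) = cls D i (m * n)" using cls_eq[OF assms] L1 by metis
  then show ?thesis unfolding cA_def by simp
qed

lemma cV_E: "v \<in> cV D \<Longrightarrow> \<exists>m. v = (fst v, cls D (fst v) m) \<and> enat (fst v) \<le> D 1 1"
  unfolding cV_def by auto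

lemma cV_I: "enat i \<le> D 1 1 \<Longrightarrow> (i, cls D i m) \<in> cV D"
  unfolding cV_def by blast

lemma root_cV: "(0, UNIV) \<in> cV D" using cV_I[of 0 1] cls0 by (simp add: zero_enat_def[symmetric])

lemma cV_root: "v \<in> cV D \<Longrightarrow> fst v = 0 \<Longrightarrow> v = (0, UNIV)"
  using cV_E cls0 by (metis)

lemma cP_pow: "enat i \<le> D 1 1 \<Longrightarrow> ((cP D) ^^ k) (i, cls D i m) = (i - k, cls D (i - k) m)"
proof (induction k)
  case 0 then show ?case by simp
next
  case (Suc k)
  have "enat (i - k) \<le> D 1 1" using Suc.prems Lmono by simp
  then show ?case using Suc cP_cls by simp
qed

lemma crt: "rooted_tree (0, UNIV) (cV D) (cP D)"
  unfolding rooted_tree_def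
proof (intro conjI ballI)
  show "(0, UNIV) \<in> cV D" by (rule root_cV)
next
  fix v assume v: "v \<in> cV D - {(0, UNIV)}"
  then obtain m where m: "v = (fst v, cls D (fst v) m)" "enat (fst v) \<le> D 1 1" using cV_E by blast
  have "cP D v = (fst v - 1, cls D (fst v - 1) m)" using cP_cls[OF m(2)] m(1) by metis
  then show "cP D v \<in> cV D" using cV_I Lmono[OF m(2)] by simp
next
  fix v assume v: "v \<in> cV D"
  then obtain m where m: "v = (fst v, cls D (fst v) m)" "enat (fst v) \<le> D 1 1" using cV_E by blast
  have "((cP D) ^^ fst v) v = (0, cls D 0 m)" using cP_pow[OF m(2), of "fst v" m] m(1) by (metis diff_self_eq_0)
  then show "\<exists>n. ((cP D) ^^ n) v = (0, UNIV)" using cls0 by (intro exI[of _ "fst v"]) simp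
qed

lemma ray0: "is_ray r0 V par \<rho> \<Longrightarrow> \<rho> 0 = Some r0" unfolding is_ray_def by blast
lemma rayN: "is_ray r0 V par \<rho> \<Longrightarrow> \<rho> i = None \<Longrightarrow> \<rho> (Suc i) = None" unfolding is_ray_def by blast
lemma rayS: "is_ray r0 V par \<rho> \<Longrightarrow> \<rho> (Suc i) = Some w \<Longrightarrow> w \<in> V \<and> w \<noteq> r0 \<and> \<rho> i = Some (par w)"
  unfolding is_ray_def by blast

lemma cray: assumes r: "is_ray (0, UNIV) (cV D) (cP D) \<rho>"
  shows "\<rho> i = Some w \<Longrightarrow> w \<in> cV D \<and> fst w = i"
proof (induction i arbitrary: w)
  case 0 then have "w = (0, UNIV)" using ray0[OF r] by simp
  then show ?case using root_cV by simp
next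
  case (Suc i)
  have w: "w \<in> cV D" "w \<noteq> (0, UNIV)" "\<rho> i = Some (cP D w)" using rayS[OF r Suc.prems] by blast+
  then have "fst (cP D w) = i" using Suc.IH by blast
  moreover have "fst w \<noteq> 0" using w cV_root by blast
  ultimately show ?case using w(1) unfolding cP_def by simp
qed

lemma cray_len: assumes r: "is_ray (0, UNIV) (cV D) (cP D) \<rho>"
  shows "\<rho> i \<noteq> None \<longleftrightarrow> enat i \<le> ray_len \<rho>"
  by (rule ray_len_iff) (simp_all add: ray0[OF r] rayN[OF r])

lemma cray_le: assumes r: "is_ray (0, UNIV) (cV D) (cP D) \<rho>" shows "ray_len \<rho> \<le> D 1 1"
proof (rule enat_ext_le)
  fix i assume "enat i \<le> ray_len \<rho>"
  then obtain w where "\<rho> i = Some w" using cray_len[OF r] by blast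
  then have "w \<in> cV D" "fst w = i" using cray[OF r] by blast+
  then show "enat i \<le> D 1 1" using cV_E by blast
qed

lemma cmax_len: assumes mr: "maximal_ray (0, UNIV) (cV D) (cP D) \<rho>" shows "ray_len \<rho> = D 1 1"
proof (rule order_antisym)
  have r: "is_ray (0, UNIV) (cV D) (cP D) \<rho>" using mr unfolding maximal_ray_def by blast
  show "ray_len \<rho> \<le> D 1 1" using cray_le[OF r] .
  have "\<forall>i. enat i \<le> D 1 1 \<longrightarrow> \<rho> i \<noteq> None"
  proof
    fix i show "enat i \<le> D 1 1 \<longrightarrow> \<rho> i \<noteq> None"
    proof (induction i)
      case 0 then show ?case using ray0[OF r] by simp
    next
      case (Suc i)
      show ?case
      proof
        assume L: "enat (Suc i) \<le> D 1 1"
        then have Li: "enat i \<le> D 1 1" using Lmono by simp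
        then obtain w where w: "\<rho> i = Some w" using Suc.IH by blast
        then have "w \<in> cV D" "fst w = i" using cray[OF r] by blast+
        then obtain m where wm: "w = (i, cls D i m)" using cV_E by metis
        show "\<rho> (Suc i) \<noteq> None"
        proof
          assume N: "\<rho> (Suc i) = None"
          define \<sigma> where "\<sigma> = \<rho>(Suc i := Some (Suc i, cls D (Suc i) m))"
          have NN: "\<rho> (Suc (Suc i)) = None" using rayN[OF r N] .
          have "is_ray (0, UNIV) (cV D) (cP D) \<sigma>"
            unfolding is_ray_def
          proof (rule conjI[OF _ conjI]; (intro allI impI)?)
            show "\<sigma> 0 = Some (0, UNIV)" using ray0[OF r] unfolding \<sigma>_def by simp
          next
            fix j assume sj: "\<sigma> j = None"
            show "\<sigma> (Suc j) = None"
            proof (cases "j = i")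
              case True then show ?thesis using sj w unfolding \<sigma>_def by simp
            next
              case False
              have "j \<noteq> Suc i" using sj unfolding \<sigma>_def by (metis fun_upd_same option.simps(3))
              then have "\<rho> j = None" using sj unfolding \<sigma>_def by simp
              then show ?thesis using rayN[OF r] False unfolding \<sigma>_def by simp
            qed
          next
            fix j w' assume h: "\<sigma> (Suc j) = Some w'"
            show "w' \<in> cV D \<and> w' \<noteq> (0, UNIV) \<and> \<sigma> j = Some (cP D w')"
            proof (cases "j = i")
              case True
              then have "w' = (Suc i, cls D (Suc i) m)" using h unfolding \<sigma>_def by simp
              moreover have "cP D (Suc i, cls D (Suc i) m) = w" using cP_cls[OF L] wm by simp
              ultimately show ?thesis using cV_I[OF L] True w unfolding \<sigma>_def by simp
            next
              case False
              then have h': "\<rho> (Suc j) = Some w'" using h unfolding \<sigma>_def by simp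
              have "j \<noteq> Suc i" using h' NN by auto
              then show ?thesis using rayS[OF r h'] False unfolding \<sigma>_def by simp
            qed
          qed
          moreover have "\<rho> \<subseteq>\<^sub>m \<sigma>" unfolding map_le_def \<sigma>_def using N by auto
          ultimately have "\<sigma> = \<rho>" using mr unfolding maximal_ray_def by blast
          then show False using N unfolding \<sigma>_def by (metis fun_upd_same option.simps(3))
        qed
      qed
    qed
  qed
  then have h: "\<forall>i. enat i \<le> D 1 1 \<longrightarrow> \<rho> i \<noteq> None" .
  show "D 1 1 \<le> ray_len \<rho>"
  proof (rule enat_ext_le)
    fix i assume "enat i \<le> D 1 1"
    then show "enat i \<le> ray_len \<rho>" using h cray_len[OF r] by blast
  qed
qed

lemma cax_ray: "is_ray (0, UNIV) (cV D) (cP D) (cax D)"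
  unfolding is_ray_def
proof (rule conjI[OF _ conjI]; (intro allI impI)?)
  show "cax D 0 = Some (0, UNIV)" unfolding cax_def using cls0 by (simp add: zero_enat_def[symmetric])
next
  fix j assume "cax D j = None"
  then show "cax D (Suc j) = None" unfolding cax_def using Lmono by (auto split: if_splits)
next
  fix j w assume h: "cax D (Suc j) = Some w"
  then have L: "enat (Suc j) \<le> D 1 1" and w: "w = (Suc j, cls D (Suc j) 1)" unfolding cax_def by (auto split: if_splits)
  have "enat j \<le> D 1 1" using L Lmono by simp
  then show "w \<in> cV D \<and> w \<noteq> (0, UNIV) \<and> cax D j = Some (cP D w)"
    using cV_I[OF L] w cP_cls[OF L] unfolding cax_def by simp
qed

lemma cax_max: "maximal_ray (0, UNIV) (cV D) (cP D) (cax D)"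
  unfolding maximal_ray_def
proof (intro conjI allI impI)
  show "is_ray (0, UNIV) (cV D) (cP D) (cax D)" by (rule cax_ray)
  fix \<sigma> assume h: "is_ray (0, UNIV) (cV D) (cP D) \<sigma> \<and> cax D \<subseteq>\<^sub>m \<sigma>"
  show "\<sigma> = cax D"
  proof
    fix j show "\<sigma> j = cax D j"
    proof (cases "enat j \<le> D 1 1")
      case True
      then have "cax D j = Some (j, cls D j 1)" unfolding cax_def by simp
      then show ?thesis using h unfolding map_le_def by (metis domI)
    next
      case False
      have "\<sigma> j = None"
      proof (rule ccontr)
        assume "\<sigma> j \<noteq> None"
        then obtain w where "\<sigma> j = Some w" by blast
        then have "w \<in> cV D" "fst w = j" using cray h by blast+
        then show False using cV_E False by blast
      qed
      then show ?thesis using False unfolding cax_def by simp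
    qed
  qed
qed


lemma cV_E2: "v \<in> cV D \<Longrightarrow> (\<And>i m. v = (i, cls D i m) \<Longrightarrow> enat i \<le> D 1 1 \<Longrightarrow> P) \<Longrightarrow> P"
  using cV_E by metis

lemma cec: "elliptic_contraction (ctree D) (ctree D) (cA D n)"
proof -
  have fV: "cA D n v \<in> cV D" if "v \<in> cV D" for v
    using that by (rule cV_E2) (simp add: cA_cls cV_I)
  have fr: "cA D n (0, UNIV) = (0, UNIV)"
    using cA_cls[of 0 n 1] cls0 by (simp add: zero_enat_def[symmetric])
  have fp: "cA D n v \<noteq> (0, UNIV) \<and> cA D n (cP D v) = cP D (cA D n v)"
    if v: "v \<in> cV D" "v \<noteq> (0, UNIV)" for v
    using v(1)
  proof (rule cV_E2)
    fix i m assume vi: "v = (i, cls D i m)" and L: "enat i \<le> D 1 1"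
    have "i \<noteq> 0" using vi v(2) cls0 by auto
    have L': "enat (i - 1) \<le> D 1 1" using L Lmono by simp
    show ?thesis using vi cA_cls[OF L] cA_cls[OF L'] cP_cls[OF L] cP_cls[OF L] \<open>i \<noteq> 0\<close> by simp
  qed
  have mt1: "tdep (0, UNIV) (cP D) (cA D n v) = tdep (0, UNIV) (cP D) v" if v: "v \<in> cV D" for v
    by (rule map_tree(1)[where f="cA D n", OF crt crt]) (use fV fr fp v in auto)
  have mt2: "tdist (0, UNIV) (cV D) (cP D) (cA D n u) (cA D n v) \<le> tdist (0, UNIV) (cV D) (cP D) u v"
    if u: "u \<in> cV D" and v: "v \<in> cV D" for u v
    by (rule map_tree(2)[where f="cA D n", OF crt crt]) (use fV fr fp u v in auto)
  show ?thesis unfolding elliptic_contraction_def ctree_def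
    using fV mt1 mt2 tdepth_eq[OF crt] by auto
qed

lemma cell: "elliptic_tree (ctree D)"
  unfolding elliptic_tree_def
proof (intro conjI allI ballI)
  show "uniform_tree (root (ctree D)) (verts (ctree D)) (parent (ctree D))"
    unfolding uniform_tree_def ctree_def using crt cmax_len by simp
  show "maximal_ray (root (ctree D)) (verts (ctree D)) (parent (ctree D)) (axis (ctree D))"
    unfolding ctree_def using cax_max by simp
  fix m show "elliptic_contraction (ctree D) (ctree D) (act (ctree D) m)"
    using cec unfolding ctree_def by simp
next
  fix v assume "v \<in> verts (ctree D)"
  then have "v \<in> cV D" unfolding ctree_def by simp
  then show "act (ctree D) 1 v = v" by (rule cV_E2) (simp add: cA_cls ctree_def)
next
  fix m m' v assume "v \<in> verts (ctree D)"
  then have "v \<in> cV D" unfolding ctree_def by simp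
  then show "act (ctree D) (m * m') v = act (ctree D) m' (act (ctree D) m v)"
    by (rule cV_E2) (simp add: cA_cls ctree_def mult.assoc)
next
  show "verts (ctree D) = {act (ctree D) m v |m v. \<exists>i. axis (ctree D) i = Some v}"
  proof
    show "verts (ctree D) \<subseteq> {act (ctree D) m v |m v. \<exists>i. axis (ctree D) i = Some v}"
    proof
      fix v assume "v \<in> verts (ctree D)"
      then have "v \<in> cV D" unfolding ctree_def by simp
      then show "v \<in> {act (ctree D) m v |m v. \<exists>i. axis (ctree D) i = Some v}"
      proof (rule cV_E2)
        fix i m assume vi: "v = (i, cls D i m)" and L: "enat i \<le> D 1 1"
        have "v = cA D m (i, cls D i 1)" "cax D i = Some (i, cls D i 1)"
          using vi cA_cls[OF L] L unfolding cax_def by simp_all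
        then show ?thesis unfolding ctree_def by auto
      qed
    qed
    show "{act (ctree D) m v |m v. \<exists>i. axis (ctree D) i = Some v} \<subseteq> verts (ctree D)"
    proof
      fix x assume "x \<in> {act (ctree D) m v |m v. \<exists>i. axis (ctree D) i = Some v}"
      then obtain m v i where x: "x = cA D m v" "cax D i = Some v" unfolding ctree_def by auto
      then have L: "enat i \<le> D 1 1" and vv: "v = (i, cls D i 1)" unfolding cax_def by (auto split: if_splits)
      then show "x \<in> verts (ctree D)" using x cA_cls[OF L] cV_I[OF L] unfolding ctree_def by simp
    qed
  qed
qed

lemma cKEY: "enat i \<le> D_chi (ctree D) m m' \<longleftrightarrow> enat i \<le> D m m'"
proof -
  interpret ET "ctree D" by (rule ET.intro[OF cell])
  have "enat i \<le> D_chi (ctree D) m m' \<longleftrightarrow> cax D i \<noteq> None \<and> cA D m (a i) = cA D m' (a i)"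
    using KEY unfolding ctree_def by simp
  also have "\<dots> \<longleftrightarrow> enat i \<le> D m m'"
  proof (cases "enat i \<le> D 1 1")
    case True
    then have "a i = (i, cls D i 1)" unfolding a_def by (simp add: ctree_def cax_def)
    then show ?thesis using True cA_cls[OF True] cls_eq[OF True] unfolding cax_def by simp
  next
    case False
    then show ?thesis unfolding cax_def using DleL[of m m'] by (meson order_trans)
  qed
  finally show ?thesis .
qed

lemma construction: "\<exists>\<chi> :: (nat \<times> 'm set, 'm) etree. elliptic_tree \<chi> \<and> strongly_faithful \<chi> \<and> D = D_chi \<chi>"
proof (intro exI conjI)
  show "elliptic_tree (ctree D)" by (rule cell)
  show "D = D_chi (ctree D)" by (rule ext, rule ext, rule enat_ext) (simp add: cKEY)
  show "strongly_faithful (ctree D)" unfolding strongly_faithful_def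
  proof (intro allI impI)
    fix m m' assume h: "ray_map (act (ctree D) m) (axis (ctree D)) = ray_map (act (ctree D) m') (axis (ctree D))"
    have "D 1 1 \<le> D m m'"
    proof (rule enat_ext_le)
      fix i assume L: "enat i \<le> D 1 1"
      have "ray_map (cA D m) (cax D) i = ray_map (cA D m') (cax D) i" using h unfolding ctree_def by simp
      then have "cls D i m = cls D i m'" using L cA_cls[OF L] unfolding ray_map_def cax_def by simp
      then show "enat i \<le> D m m'" using cls_eq[OF L] by simp
    qed
    then have "D m m' = D m m" using DleL Dself by (metis order_antisym)
    then show "m = m'" using L5 by blast
  qed
qed

end


theorem corollary4p9:
  fixes D :: "'m::monoid_mult \<Rightarrow> 'm \<Rightarrow> enat"
  shows "(strict_length_function D \<longleftrightarrow>
           (\<exists>\<chi> :: (nat \<times> 'm set, 'm) etree.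
               elliptic_tree \<chi> \<and> strongly_faithful \<chi> \<and> D = D_chi \<chi>)) \<and>
         (\<forall>\<chi> :: ('v, 'm) etree.
           elliptic_tree \<chi> \<and> strongly_faithful \<chi> \<and> D = D_chi \<chi> \<longrightarrow>
           strict_length_function D) \<and>
         (\<forall>(\<chi> :: ('v, 'm) etree) (\<chi>' :: ('w, 'm) etree).
           elliptic_tree \<chi> \<and> strongly_faithful \<chi> \<and> D = D_chi \<chi> \<and>
           elliptic_tree \<chi>' \<and> strongly_faithful \<chi>' \<and> D = D_chi \<chi>' \<longrightarrow>
           etree_isomorphic \<chi> \<chi>')"
proof (intro conjI allI impI)
  show "strict_length_function D \<longleftrightarrow>
           (\<exists>\<chi> :: (nat \<times> 'm set, 'm) etree.
               elliptic_tree \<chi> \<and> strongly_faithful \<chi> \<and> D = D_chi \<chi>)"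
  proof
    assume "strict_length_function D"
    then show "\<exists>\<chi> :: (nat \<times> 'm set, 'm) etree. elliptic_tree \<chi> \<and> strongly_faithful \<chi> \<and> D = D_chi \<chi>"
      by (rule construction)
  next
    assume "\<exists>\<chi> :: (nat \<times> 'm set, 'm) etree. elliptic_tree \<chi> \<and> strongly_faithful \<chi> \<and> D = D_chi \<chi>"
    then obtain \<chi> :: "(nat \<times> 'm set, 'm) etree" where h: "elliptic_tree \<chi>" "strongly_faithful \<chi>" "D = D_chi \<chi>"
      by blast
    show "strict_length_function D" using ET.strict[OF ET.intro[OF h(1)] h(2)] h(3) by simp
  qed
next
  fix \<chi> :: "('v, 'm) etree"
  assume h: "elliptic_tree \<chi> \<and> strongly_faithful \<chi> \<and> D = D_chi \<chi>"
  then have h1: "elliptic_tree \<chi>" "strongly_faithful \<chi>" "D = D_chi \<chi>" by blast+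
  show "strict_length_function D" using ET.strict[OF ET.intro[OF h1(1)] h1(2)] h1(3) by simp
next
  fix \<chi> :: "('v, 'm) etree" and \<chi>' :: "('w, 'm) etree"
  assume h: "elliptic_tree \<chi> \<and> strongly_faithful \<chi> \<and> D = D_chi \<chi> \<and>
           elliptic_tree \<chi>' \<and> strongly_faithful \<chi>' \<and> D = D_chi \<chi>'"
  then have e1: "D = D_chi \<chi>" and e2: "D = D_chi \<chi>'" by blast+
  have "D_chi \<chi> = D_chi \<chi>'" by (simp only: e1[symmetric] e2[symmetric])
  then show "etree_isomorphic \<chi> \<chi>'" using iso h by blast
qed

end
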